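(* Let $P\in\mathsf{AST}$. For a rational $0<\delta<1$ and a scheduler $f$, call the smallest $k\in\mathbb{N}$ satisfying $\sum_{\tau\in T_{\le k}(P,f)}\mathrm{Prob}(\tau)>\delta$ the required simulation time to cross $\delta$ for $f$. Then, for each such $\delta$, the set of required simulation times to cross $\delta$ over all schedulers $f$ has an upper bound.
   Context: pGCL. Fix a countable set $\mathrm{Var}$ of variables taking rational values. Programs are generated by $P ::= \bot \mid v:=e \mid P;P \mid P\oplus_p P \mid P\,[\!]\,P \mid \mathtt{while}(b)\{P\}$ ($v\in\mathrm{Var}$, $e,p$ arithmetical expressions, $b$ boolean expression, $\bot$ the empty program; $\oplus_p$ probabilistic choice, $[\!]$ nondeterministic choice). A valuation is $\eta:\mathrm{Var}\to\mathbb{Q}$. A scheduler is a total function $f:\{L_n,R_n,L_p,R_p\}^*\to\{L_n,R_n\}$; $\mathbb{F}$ is the set of schedulers. An execution state is $(P,\eta,a,w)$ with $a\in\mathbb{Q}\cap(0,1]$, $w\in\{L_n,R_n,L_p,R_p\}^*$; states with program $\bot$ are terminal. For $f\in\mathbb{F}$, $\to_f$ is the smallest relation with: $(v:=e,\eta,a,w)\to_f(\bot,\eta[v\mapsto[\![e]\!]_\eta],a,w)$; if $(P_1,\eta,a,w)\to_f(P_1',\eta',a',w')$ then $(P_1;P_2,\eta,a,w)\to_f(P_1';P_2,\eta',a',w')$; $(\bot;P_2,\eta,a,w)\to_f(P_2,\eta,a,w)$; $(P_1\oplus_pP_2,\eta,a,w)\to_f(P_2,\eta,a,wR_p)$ if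 $[\![p]\!]_\eta\le0$, $\to_f(P_1,\eta,a,wL_p)$ if $[\![p]\!]_\eta\ge1$, and if $0<[\![p]\!]_\eta<1$ both $\to_f(P_1,\eta,a[\![p]\!]_\eta,wL_p)$ and $\to_f(P_2,\eta,a(1-[\![p]\!]_\eta),wR_p)$; $(P_1[\!]P_2,\eta,a,w)\to_f(P_1,\eta,a,wL_n)$ if $f(w)=L_n$, $\to_f(P_2,\eta,a,wR_n)$ if $f(w)=R_n$; $(\mathtt{while}(b)\{P\},\eta,a,w)\to_f(P;\mathtt{while}(b)\{P\},\eta,a,w)$ if $b$ holds, else $\to_f(\bot,\eta,a,w)$. $\to_f^n$ ($n\ge1$) is the $n$-fold composition, $\to_f^*=\bigcup_{n\ge1}\to_f^n$. The initial execution state of $P$ is $(P,\eta_0,1,\varepsilon)$, $\eta_0\equiv0$. $\mathrm{Prob}((P,\eta,a,w))=a$. $T_{\le k}(P,f)$ is the set of terminal execution states $\tau$ with $(P,\eta_0,1,\varepsilon)\to_f^n\tau$ for some $n\le k$. $\Pr_{\mathrm{term}}(P,f)=\sum\mathrm{Prob}(\tau)$ over all terminal $\tau$ with $(P,\eta_0,1,\varepsilon)\to_f^*\tau$. $\mathsf{AST}$ is the set of programs $P$ with $\Pr_{\mathrm{term}}(P,f)=1$ for every scheduler $f$. *)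

theory Defs
  imports "HOL-Analysis.Analysis"
begin

type_synonym var = nat
type_synonym valuation = "var \<Rightarrow> rat"

text \<open>Arithmetic and boolean expressions (the paper leaves their syntax open).\<close>
datatype aexp = N rat | V var | Plus aexp aexp | Minus aexp aexp
  | Times aexp aexp | Divide aexp aexp

datatype bexp = BTrue | BFalse | BNot bexp | BAnd bexp bexp | BOr bexp bexp
  | BLess aexp aexp | BLeq aexp aexp | BEq aexp aexp

fun aval :: "aexp \<Rightarrow> valuation \<Rightarrow> rat" where
  "aval (N c) \<eta> = c"
| "aval (V v) \<eta> = \<eta> v"
| "aval (Plus e1 e2) \<eta> = aval e1 \<eta> + aval e2 \<eta>"
| "aval (Minus e1 e2) \<eta> = aval e1 \<eta> - aval e2 \<eta>"
| "aval (Times e1 e2) \<eta> = aval e1 \<eta> * aval e2 \<eta>"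
| "aval (Divide e1 e2) \<eta> = aval e1 \<eta> / aval e2 \<eta>"

fun bval :: "bexp \<Rightarrow> valuation \<Rightarrow> bool" where
  "bval BTrue \<eta> = True"
| "bval BFalse \<eta> = False"
| "bval (BNot b) \<eta> = (\<not> bval b \<eta>)"
| "bval (BAnd b1 b2) \<eta> = (bval b1 \<eta> \<and> bval b2 \<eta>)"
| "bval (BOr b1 b2) \<eta> = (bval b1 \<eta> \<or> bval b2 \<eta>)"
| "bval (BLess e1 e2) \<eta> = (aval e1 \<eta> < aval e2 \<eta>)"
| "bval (BLeq e1 e2) \<eta> = (aval e1 \<eta> \<le> aval e2 \<eta>)"
| "bval (BEq e1 e2) \<eta> = (aval e1 \<eta> = aval e2 \<eta>)"

text \<open>pGCL programs. Bot is the empty program, PChoice P p Q is P \<oplus>_p Q,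
  NChoice P Q is the nondeterministic choice P [] Q.\<close>
datatype prog = Bot | Assign var aexp | Seq prog prog
  | PChoice prog aexp prog | NChoice prog prog | While bexp prog

datatype dir = Ln | Rn | Lp | Rp

definition schedulers :: "(dir list \<Rightarrow> dir) set" where
  "schedulers = {f. \<forall>w. f w \<in> {Ln, Rn}}"

text \<open>Execution states (P, \<eta>, a, w); a is a rational in (0,1].\<close>
type_synonym state = "prog \<times> valuation \<times> rat \<times> dir list"

inductive step :: "(dir list \<Rightarrow> dir) \<Rightarrow> state \<Rightarrow> state \<Rightarrow> bool" for f where
  assign: "step f (Assign v e, \<eta>, a, w) (Bot, \<eta>(v := aval e \<eta>), a, w)"
| seq: "step f (P1, \<eta>, a, w) (P1', \<eta>', a', w') \<Longrightarrow>
        step f (Seq P1 P2, \<eta>, a, w) (Seq P1' P2, \<eta>', a', w')"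
| seq_bot: "step f (Seq Bot P2, \<eta>, a, w) (P2, \<eta>, a, w)"
| pchoice_le0: "aval p \<eta> \<le> 0 \<Longrightarrow> step f (PChoice P1 p P2, \<eta>, a, w) (P2, \<eta>, a, w @ [Rp])"
| pchoice_ge1: "aval p \<eta> \<ge> 1 \<Longrightarrow> step f (PChoice P1 p P2, \<eta>, a, w) (P1, \<eta>, a, w @ [Lp])"
| pchoice_L: "0 < aval p \<eta> \<Longrightarrow> aval p \<eta> < 1 \<Longrightarrow>
    step f (PChoice P1 p P2, \<eta>, a, w) (P1, \<eta>, a * aval p \<eta>, w @ [Lp])"
| pchoice_R: "0 < aval p \<eta> \<Longrightarrow> aval p \<eta> < 1 \<Longrightarrow>
    step f (PChoice P1 p P2, \<eta>, a, w) (P2, \<eta>, a * (1 - aval p \<eta>), w @ [Rp])"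
| nchoice_L: "f w = Ln \<Longrightarrow> step f (NChoice P1 P2, \<eta>, a, w) (P1, \<eta>, a, w @ [Ln])"
| nchoice_R: "f w = Rn \<Longrightarrow> step f (NChoice P1 P2, \<eta>, a, w) (P2, \<eta>, a, w @ [Rn])"
| while_true: "bval b \<eta> \<Longrightarrow> step f (While b P, \<eta>, a, w) (Seq P (While b P), \<eta>, a, w)"
| while_false: "\<not> bval b \<eta> \<Longrightarrow> step f (While b P, \<eta>, a, w) (Bot, \<eta>, a, w)"

definition init_state :: "prog \<Rightarrow> state" where
  "init_state P = (P, (\<lambda>_. 0), 1, [])"

definition terminal :: "state \<Rightarrow> bool" where
  "terminal \<tau> \<longleftrightarrow> fst \<tau> = Bot"

definition Prob :: "state \<Rightarrow> rat" where
  "Prob \<tau> = fst (snd (snd \<tau>))"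

definition T_le :: "nat \<Rightarrow> prog \<Rightarrow> (dir list \<Rightarrow> dir) \<Rightarrow> state set" where
  "T_le k P f = {\<tau>. terminal \<tau> \<and> (\<exists>n. 1 \<le> n \<and> n \<le> k \<and> (step f ^^ n) (init_state P) \<tau>)}"

definition T_all :: "prog \<Rightarrow> (dir list \<Rightarrow> dir) \<Rightarrow> state set" where
  "T_all P f = {\<tau>. terminal \<tau> \<and> (\<exists>n. 1 \<le> n \<and> (step f ^^ n) (init_state P) \<tau>)}"

definition Pr_term :: "prog \<Rightarrow> (dir list \<Rightarrow> dir) \<Rightarrow> real" where
  "Pr_term P f = (\<Sum>\<^sub>\<infinity>\<tau>\<in>T_all P f. real_of_rat (Prob \<tau>))"

definition AST :: "prog set" where
  "AST = {P. \<forall>f\<in>schedulers. Pr_term P f = 1}"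

definition req_time :: "prog \<Rightarrow> rat \<Rightarrow> (dir list \<Rightarrow> dir) \<Rightarrow> nat" where
  "req_time P \<delta> f = (LEAST k. (\<Sum>\<tau>\<in>T_le k P f. Prob \<tau>) > \<delta>)"

end

theory Submission
  imports Defs
begin

fun succs :: "state \<Rightarrow> state set" where
  "succs (Bot, \<eta>, a, w) = {}"
| "succs (Assign v e, \<eta>, a, w) = {(Bot, \<eta>(v := aval e \<eta>), a, w)}"
| "succs (Seq P1 P2, \<eta>, a, w) =
     (\<lambda>(P1', r). (Seq P1' P2, r)) ` succs (P1, \<eta>, a, w) \<union> {(P2, \<eta>, a, w)}"
| "succs (PChoice P1 p P2, \<eta>, a, w) = {(P2, \<eta>, a, w @ [Rp]), (P1, \<eta>, a, w @ [Lp]),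
     (P1, \<eta>, a * aval p \<eta>, w @ [Lp]), (P2, \<eta>, a * (1 - aval p \<eta>), w @ [Rp])}"
| "succs (NChoice P1 P2, \<eta>, a, w) = {(P1, \<eta>, a, w @ [Ln]), (P2, \<eta>, a, w @ [Rn])}"
| "succs (While b P, \<eta>, a, w) = {(Seq P (While b P), \<eta>, a, w), (Bot, \<eta>, a, w)}"

lemma finite_succs: "finite (succs s)"
  by (induction s rule: succs.induct) auto

lemma step_succs: "step f s s' \<Longrightarrow> s' \<in> succs s"
  by (induction rule: step.induct) force+

lemma step_hist: "step f s s' \<Longrightarrow> length (snd (snd (snd s'))) \<le> Suc (length (snd (snd (snd s))))"
  by (induction rule: step.induct) auto

lemma step_local: "step f s s' \<Longrightarrow> f (snd (snd (snd s))) = g (snd (snd (snd s))) \<Longrightarrow> step g s s'"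
  by (induction rule: step.induct) (auto intro: step.intros)

lemma step_pos: "step f s s' \<Longrightarrow> Prob s > 0 \<Longrightarrow> Prob s' > 0"
  by (induction rule: step.induct) (auto simp: Prob_def)

lemma reach_pos: "(step f ^^ n) (init_state P) s \<Longrightarrow> Prob s > 0"
proof (induction n arbitrary: s)
  case 0 then show ?case by (auto simp: init_state_def Prob_def)
next
  case (Suc n)
  then obtain t where "(step f ^^ n) (init_state P) t" "step f t s" by (meson relpowp_Suc_E)
  then show ?case using Suc step_pos by blast
qed

lemma finite_reach: "finite {s. (step f ^^ n) s0 s}"
proof (induction n)
  case 0 then show ?case by simp
next
  case (Suc n)
  have "{s. (step f ^^ Suc n) s0 s} \<subseteq> \<Union> (succs ` {t. (step f ^^ n) s0 t})"
    by (auto elim!: relpowp_Suc_E dest: step_succs)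
  moreover have "finite (\<Union> (succs ` {t. (step f ^^ n) s0 t}))"
    using Suc finite_succs by blast
  ultimately show ?case by (rule finite_subset)
qed

lemma finite_T_le: "finite (T_le k P f)"
proof -
  have "T_le k P f \<subseteq> (\<Union>n\<in>{..k}. {s. (step f ^^ n) (init_state P) s})"
    unfolding T_le_def by auto
  moreover have "finite (\<Union>n\<in>{..k}. {s. (step f ^^ n) (init_state P) s})"
    using finite_reach by blast
  ultimately show ?thesis by (rule finite_subset)
qed

definition agree :: "nat \<Rightarrow> (dir list \<Rightarrow> dir) \<Rightarrow> (dir list \<Rightarrow> dir) \<Rightarrow> bool" where
  "agree k f g \<longleftrightarrow> (\<forall>w. length w < k \<longrightarrow> f w = g w)"

lemma reach_local:
  assumes "agree k f g"
  shows "(step f ^^ n) s0 s \<Longrightarrow> n \<le> k \<Longrightarrow> snd (snd (snd s0)) = [] \<Longrightarrow>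
     (step g ^^ n) s0 s \<and> length (snd (snd (snd s))) \<le> n"
proof (induction n arbitrary: s)
  case 0 then show ?case by simp
next
  case (Suc n)
  then obtain t where t: "(step f ^^ n) s0 t" "step f t s" by (meson relpowp_Suc_E)
  with Suc have IH: "(step g ^^ n) s0 t" "length (snd (snd (snd t))) \<le> n" by auto
  with Suc have "length (snd (snd (snd t))) < k" by auto
  with assms have "f (snd (snd (snd t))) = g (snd (snd (snd t)))" unfolding agree_def by auto
  with t have "step g t s" using step_local by blast
  with IH have "(step g ^^ Suc n) s0 s" by auto
  moreover have "length (snd (snd (snd s))) \<le> Suc n" using step_hist[OF t(2)] IH by auto
  ultimately show ?case by auto
qed

lemma T_le_local:
  assumes "agree k f g"
  shows "T_le k P f = T_le k P g"
proof -
  have ag: "agree k g f" using assms unfolding agree_def by auto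
  have h: "snd (snd (snd (init_state P))) = []" by (simp add: init_state_def)
  show ?thesis unfolding T_le_def
    using reach_local[OF assms _ _ h] reach_local[OF ag _ _ h] by blast
qed

definition bad :: "prog \<Rightarrow> rat \<Rightarrow> nat \<Rightarrow> (dir list \<Rightarrow> dir) \<Rightarrow> bool" where
  "bad P \<delta> j f \<longleftrightarrow> (\<Sum>\<tau>\<in>T_le j P f. Prob \<tau>) \<le> \<delta>"

lemma T_le_pos: "\<tau> \<in> T_le k P f \<Longrightarrow> Prob \<tau> > 0"
  unfolding T_le_def using reach_pos by blast

lemma bad_mono: "j \<le> j' \<Longrightarrow> bad P \<delta> j' f \<Longrightarrow> bad P \<delta> j f"
proof -
  assume a: "j \<le> j'" "bad P \<delta> j' f"
  have "T_le j P f \<subseteq> T_le j' P f" using a(1) unfolding T_le_def by auto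
  then have "(\<Sum>\<tau>\<in>T_le j P f. Prob \<tau>) \<le> (\<Sum>\<tau>\<in>T_le j' P f. Prob \<tau>)"
    by (intro sum_mono2 finite_T_le) (auto dest: T_le_pos intro: less_imp_le)
  with a(2) show ?thesis unfolding bad_def by auto
qed

definition good :: "prog \<Rightarrow> rat \<Rightarrow> nat \<Rightarrow> (dir list \<Rightarrow> dir) \<Rightarrow> bool" where
  "good P \<delta> k g \<longleftrightarrow> g \<in> schedulers \<and> (\<forall>j. \<exists>f\<in>schedulers. agree k f g \<and> bad P \<delta> j f)"

lemma finite_dir: "finite (UNIV :: dir set)"
proof -
  have "UNIV = {Ln, Rn, Lp, Rp}" by (auto intro: dir.exhaust)
  moreover have "finite {Ln, Rn, Lp, Rp}" by simp
  ultimately show ?thesis by metis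
qed

lemma good_step:
  assumes "good P \<delta> k g"
  shows "\<exists>g'. good P \<delta> (Suc k) g' \<and> agree k g g'"
proof -
  from assms have "\<forall>j. \<exists>f. f \<in> schedulers \<and> agree k f g \<and> bad P \<delta> j f"
    unfolding good_def by blast
  then obtain F where F: "\<And>j. F j \<in> schedulers \<and> agree k (F j) g \<and> bad P \<delta> j (F j)"
    by metis
  define L where "L = {w :: dir list. length w < Suc k}"
  define h where "h j = (\<lambda>w. if w \<in> L then F j w else Ln)" for j
  have finL: "finite L"
    using finite_lists_length_le[OF finite_dir, of k] unfolding L_def
    by (rule finite_subset[rotated]) auto
  have "h ` UNIV \<subseteq> {r. \<forall>x. (x \<in> L \<longrightarrow> r x \<in> UNIV) \<and> (x \<notin> L \<longrightarrow> r x = Ln)}"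
    unfolding h_def by auto
  moreover have "finite {r. \<forall>x. (x \<in> L \<longrightarrow> r x \<in> (UNIV::dir set)) \<and> (x \<notin> L \<longrightarrow> r x = Ln)}"
    by (rule finite_set_of_finite_funs[OF finL finite_dir])
  ultimately have "finite (h ` UNIV)" by (rule finite_subset)
  then obtain r where r: "r \<in> h ` UNIV" "infinite (h -` {r})"
    using inf_img_fin_dom[of h UNIV] by auto
  then obtain j0 where j0: "r = h j0" by auto
  have "r \<in> schedulers"
    using F[of j0] unfolding j0 h_def schedulers_def by auto
  moreover have "\<exists>f\<in>schedulers. agree (Suc k) f r \<and> bad P \<delta> j f" for j
  proof -
    obtain j' where j': "j' \<ge> j" "h j' = r"
      using r(2) unfolding infinite_nat_iff_unbounded_le by auto
    have "agree (Suc k) (F j') r" using j'(2) unfolding agree_def h_def L_def by auto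
    moreover have "bad P \<delta> j (F j')" using F[of j'] bad_mono j'(1) by blast
    ultimately show ?thesis using F[of j'] by blast
  qed
  moreover have "agree k g r"
    using F[of j0] unfolding j0 h_def L_def agree_def by auto
  ultimately show ?thesis unfolding good_def by blast
qed

lemma koenig:
  assumes "\<forall>j. \<exists>f\<in>schedulers. bad P \<delta> j f"
  shows "\<exists>f\<in>schedulers. \<forall>k. bad P \<delta> k f"
proof -
  define g0 :: "dir list \<Rightarrow> dir" where "g0 = (\<lambda>_. Ln)"
  have g0: "good P \<delta> 0 g0"
    using assms unfolding good_def agree_def g0_def schedulers_def by auto
  define G where "G = rec_nat g0 (\<lambda>k g. SOME g'. good P \<delta> (Suc k) g' \<and> agree k g g')"
  have G0: "G 0 = g0" unfolding G_def by simp
  have GS: "G (Suc k) = (SOME g'. good P \<delta> (Suc k) g' \<and> agree k (G k) g')" for k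
    unfolding G_def by simp
  have Gk: "good P \<delta> k (G k)" for k
  proof (induction k)
    case 0 then show ?case using g0 G0 by simp
  next
    case (Suc k)
    show ?case unfolding GS using someI_ex[OF good_step[OF Suc.IH]] by simp
  qed
  have Gg: "good P \<delta> k (G k) \<and> agree k (G k) (G (Suc k))" for k
    unfolding GS using someI_ex[OF good_step[OF Gk[of k]]] Gk[of k] by simp
  have Gm: "k \<le> m \<Longrightarrow> agree k (G m) (G k)" for k m
  proof (induction m rule: dec_induct)
    case base then show ?case by (simp add: agree_def)
  next
    case (step m)
    then show ?case using Gg[of m] unfolding agree_def by auto
  qed
  define fs where "fs w = G (Suc (length w)) w" for w
  have "fs \<in> schedulers"
    using Gg unfolding fs_def good_def schedulers_def by auto
  moreover have "bad P \<delta> k fs" for k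
  proof -
    have agk: "agree k fs (G k)"
      unfolding agree_def fs_def
    proof (intro allI impI)
      fix w :: "dir list" assume "length w < k"
      then have "agree (Suc (length w)) (G k) (G (Suc (length w)))" using Gm by simp
      then show "G (Suc (length w)) w = G k w" unfolding agree_def by simp
    qed
    obtain f where f: "f \<in> schedulers" "agree k f (G k)" "bad P \<delta> k f"
      using Gg[of k] unfolding good_def by blast
    have "agree k fs f" using agk f(2) unfolding agree_def by auto
    then have "T_le k P fs = T_le k P f" by (rule T_le_local)
    then show ?thesis using f(3) unfolding bad_def by simp
  qed
  ultimately show ?thesis by blast
qed

lemma not_term:
  assumes "\<forall>k. bad P \<delta> k f" "\<delta> < 1"
  shows "Pr_term P f \<noteq> 1"
proof (cases "(\<lambda>\<tau>. real_of_rat (Prob \<tau>)) summable_on T_all P f")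
  case False
  then show ?thesis unfolding Pr_term_def using infsum_not_exists by force
next
  case True
  have "Pr_term P f \<le> real_of_rat \<delta>"
    unfolding Pr_term_def
  proof (rule infsum_le_finite_sums[OF True])
    fix F assume F: "finite F" "F \<subseteq> T_all P f"
    then have "\<forall>\<tau>\<in>F. \<exists>n. 1 \<le> n \<and> (step f ^^ n) (init_state P) \<tau>"
      unfolding T_all_def by auto
    then obtain n where n: "\<And>\<tau>. \<tau> \<in> F \<Longrightarrow> 1 \<le> n \<tau> \<and> (step f ^^ n \<tau>) (init_state P) \<tau>"
      by metis
    define k where "k = (\<Sum>\<tau>\<in>F. n \<tau>)"
    have "n \<tau> \<le> k" if "\<tau> \<in> F" for \<tau>
      unfolding k_def using member_le_sum[OF that _ F(1), of n] by simp
    then have FT: "F \<subseteq> T_le k P f"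
      using F n unfolding T_le_def T_all_def by blast
    have "(\<Sum>\<tau>\<in>F. real_of_rat (Prob \<tau>)) \<le> (\<Sum>\<tau>\<in>T_le k P f. real_of_rat (Prob \<tau>))"
      by (intro sum_mono2 finite_T_le FT) (auto dest: T_le_pos intro: less_imp_le)
    also have "\<dots> = real_of_rat (\<Sum>\<tau>\<in>T_le k P f. Prob \<tau>)" by (simp add: of_rat_sum)
    also have "\<dots> \<le> real_of_rat \<delta>" using assms(1) unfolding bad_def by (simp add: of_rat_less_eq)
    finally show "(\<Sum>\<tau>\<in>F. real_of_rat (Prob \<tau>)) \<le> real_of_rat \<delta>" .
  qed
  moreover have "real_of_rat \<delta> < 1" using assms(2) by (metis of_rat_1 of_rat_less)
  ultimately show ?thesis by auto
qed

theorem lemmaB3: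
  fixes P :: prog and \<delta> :: rat
  assumes "P \<in> AST" and "0 < \<delta>" and "\<delta> < 1"
  shows "bdd_above (req_time P \<delta> ` schedulers)"
proof (rule ccontr)
  assume nb: "\<not> bdd_above (req_time P \<delta> ` schedulers)"
  have "\<exists>f\<in>schedulers. bad P \<delta> j f" for j
  proof -
    from nb obtain f where f: "f \<in> schedulers" "req_time P \<delta> f > j"
      by (meson bdd_aboveI2 not_le)
    have "bad P \<delta> j f"
    proof (rule ccontr)
      assume "\<not> bad P \<delta> j f"
      then have "(\<Sum>\<tau>\<in>T_le j P f. Prob \<tau>) > \<delta>" unfolding bad_def by simp
      then have "req_time P \<delta> f \<le> j" unfolding req_time_def by (rule Least_le)
      with f show False by simp
    qed
    with f show ?thesis by blast
  qed
  then obtain f where "f \<in> schedulers" "\<forall>k. bad P \<delta> k f" using koenig by blast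
  then have "Pr_term P f \<noteq> 1" using not_term assms(3) by blast
  with assms(1) \<open>f \<in> schedulers\<close> show False unfolding AST_def by blast
qed

end
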